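(* Let $\rho\in V_0$ be non-integral. Let $\mathcal A\subseteq\mathrm{End}_{\mathbb C}\,\mathcal C(\rho+\Lambda_+)$ be the algebra generated by the multiplication operators $m_h$ ($h\in\mathcal P^W$) and $L$. For $X\in\mathrm{End}_{\mathbb C}\,\mathcal C(\rho+\Lambda_+)$ define $\widehat X$ by $\widehat X(h):=\widehat{X(\widehat h)}$. Then $X\mapsto\widehat X$ restricts to an involutory automorphism of $\mathcal A$; more precisely $\widehat{m_h}=D_h$ for all $h\in\mathcal P^W$ and $\widehat L=-L$.
   Context: Setting: $V$ is a finite-dimensional complex vector space, $W\subseteq GL(V)$ a finite reflection group, $\Lambda_+\subseteq V$ a finitely generated submonoid whose minimal set of generators $\Sigma^\vee$ is a basis of $V$, and $\ell:V\to\mathbb C$ a $W$-invariant linear form with $\ell(\Lambda_+)\subseteq\mathbb N$; these data satisfy the axioms of F. Knop, "Construction of commuting difference operators for multiplicity free spaces" (the combinatorial data attached to multiplicity free representations). Notation: $\Gamma^\vee=\mathbb Z\Lambda_+$, $\Gamma\subseteq V^\vee$ its dual lattice, $\Sigma\subseteq V^\vee$ the dual basis of $\Sigma^\vee$, $\Phi=\bigcup_{w\in W}w\Sigma$, $\Delta\subseteq\Gamma$ the root system of $W$ with roots primitive in $\Gamma$, $\Delta^+=\{\alpha\in\Delta:\alpha(\Sigma^\vee)\ge0\}$, $\Lambda_1=\{w\eta:w\in W,\eta\in\Sigma^\vee,\ell(\eta)=1\}$. $V_0$ is the set of $\rho\in V$ with $\omega_1(\rho)=\omega_2(\rho)$ whenever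 $\omega_1,\omega_2\in\Sigma$, $\omega_1\in\pm W\omega_2$; for $\rho\in V_0$, $\omega\in\pm\Phi$, $k_\omega:=\omega_1(\rho)$ with $\omega_1\in(\pm W\omega)\cap\Sigma$. $\rho\in V_0$ is non-integral if $\alpha(\rho)\notin\mathbb Z$ for all $\alpha\in\Delta^+$. $\mathcal P$ = polynomial functions on $V$. Known: for such $\rho$ and $\lambda\in\Lambda_+$ there is a unique $p_\lambda\in\mathcal P^W$ with $\deg p_\lambda\le\ell(\lambda)$ and $p_\lambda(\rho+\mu)=\delta_{\lambda\mu}$ for all $\mu\in\Lambda_+$ with $\ell(\mu)\le\ell(\lambda)$; they form a basis of $\mathcal P^W$. $\mathcal C(\rho+\Lambda_+)$ is the space of complex functions on $\rho+\Lambda_+$ ($\mathcal P^W$ embeds by restriction), and for $h\in\mathcal C(\rho+\Lambda_+)$, $\widehat h(\rho+\mu):=\sum_{\tau\in\Lambda_+}(-1)^{\ell(\tau)}p_\tau(\rho+\mu)h(\rho+\tau)$ (finite sum). Difference operators: $[z\downarrow d]=z(z-1)\cdots(z-d+1)$ for $d>0$, $=1$ otherwise; for $\tau\in\Gamma^\vee$, $f_\tau(z)=\prod_{\omega\in\Phi}[\omega(z)-k_\omega\downarrow\omega(\tau)]\big/\prod_{\alpha\in\Delta}[\alpha(z)\downarrow\alpha(\tau)]$; $L$ acts on $\mathcal C(\rho+\Lambda_+)$ by $(Lh)(\rho+\lambda)=\sum_{\eta\in\Lambda_1}f_\eta(\rho+\lambda)h(\rho+\lambda-\eta)$, which is well defined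 since (known) $f_\eta(\rho+\lambda)=0$ whenever $\lambda\in\Lambda_+$, $\lambda-\eta\notin\Lambda_+$; on polynomials this is $L=\sum_{\eta\in\Lambda_1}f_\eta(z)T_\eta$ with $(T_\eta f)(z)=f(z-\eta)$. Known: $(\mathrm{ad}L)^n(m_h)=0$ for $n>\deg h$, and $D_h:=\sum_{n\ge0}\frac1{n!}(\mathrm{ad}L)^n(m_h)\in\mathcal A$ satisfies $D_h(p_\lambda)=h(\rho+\lambda)p_\lambda$. *)

theory Defs
  imports "HOL-Analysis.Analysis"
begin

text \<open>Coordinates: V is identified with 'n => complex via the basis Sigma-check
 (standard basis vectors), so Lambda_+ = N^n is represented by 'n => nat,
 Sigma = coordinate functionals, Gamma = integer coefficient functionals.
 C(rho + Lambda_+) is represented by functions ('n => nat) => complex.\<close>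

type_synonym 'n vec = "'n \<Rightarrow> complex"
type_synonym 'n wt = "'n \<Rightarrow> nat"
type_synonym 'n fn = "'n wt \<Rightarrow> complex"
type_synonym 'n op = "'n fn \<Rightarrow> 'n fn"

definition of_wt :: "'n wt \<Rightarrow> 'n vec" where
  "of_wt lam = (\<lambda>i. of_nat (lam i))"

definition shift :: "'n vec \<Rightarrow> 'n wt \<Rightarrow> 'n vec" where
  "shift rho lam = (\<lambda>i. rho i + of_nat (lam i))"

definition basis_vec :: "'n \<Rightarrow> 'n vec" where
  "basis_vec j = (\<lambda>i. if i = j then 1 else 0)"

definition coord :: "'n \<Rightarrow> 'n vec \<Rightarrow> complex" where
  "coord i = (\<lambda>x. x i)"

definition is_clinear :: "('n vec \<Rightarrow> 'n vec) \<Rightarrow> bool" where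
  "is_clinear w \<longleftrightarrow> (\<forall>x y. w (\<lambda>i. x i + y i) = (\<lambda>i. w x i + w y i))
                    \<and> (\<forall>c x. w (\<lambda>i. c * x i) = (\<lambda>i. c * w x i))"

definition is_reflection :: "('n::finite vec \<Rightarrow> 'n vec) \<Rightarrow> bool" where
  "is_reflection s \<longleftrightarrow> (\<exists>a c. a \<noteq> (\<lambda>i. 0) \<and> (\<Sum>i\<in>UNIV. c i * a i) = 2 \<and>
        s = (\<lambda>x. \<lambda>j. x j - (\<Sum>i\<in>UNIV. c i * x i) * a j))"

definition finite_reflection_group :: "('n::finite vec \<Rightarrow> 'n vec) set \<Rightarrow> bool" where
  "finite_reflection_group W \<longleftrightarrow>
     finite W \<and> id \<in> W \<and> (\<forall>w\<in>W. is_clinear w \<and> bij w)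
     \<and> (\<forall>v\<in>W. \<forall>w\<in>W. v \<circ> w \<in> W)
     \<and> (\<forall>w\<in>W. \<exists>ss. set ss \<subseteq> W \<inter> Collect is_reflection \<and> w = foldr (\<circ>) ss id)"

definition dual_act :: "('n vec \<Rightarrow> 'n vec) \<Rightarrow> ('n vec \<Rightarrow> complex) \<Rightarrow> ('n vec \<Rightarrow> complex)" where
  "dual_act w om = om \<circ> inv w"

definition Phi :: "('n vec \<Rightarrow> 'n vec) set \<Rightarrow> ('n vec \<Rightarrow> complex) set" where
  "Phi W = {dual_act w (coord i) | w i. w \<in> W}"

definition pmWorbit :: "('n vec \<Rightarrow> 'n vec) set \<Rightarrow> ('n vec \<Rightarrow> complex) \<Rightarrow> ('n vec \<Rightarrow> complex) set" where
  "pmWorbit W om = {dual_act w om | w. w \<in> W} \<union> {(\<lambda>x. - dual_act w om x) | w. w \<in> W}"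

definition V0 :: "('n vec \<Rightarrow> 'n vec) set \<Rightarrow> 'n vec set" where
  "V0 W = {rho. \<forall>i j. coord i \<in> pmWorbit W (coord j) \<longrightarrow> rho i = rho j}"

definition kval :: "('n vec \<Rightarrow> 'n vec) set \<Rightarrow> 'n vec \<Rightarrow> ('n vec \<Rightarrow> complex) \<Rightarrow> complex" where
  "kval W rho om = (SOME k. \<exists>i. coord i \<in> pmWorbit W om \<and> k = rho i)"

definition lf :: "('n::finite \<Rightarrow> int) \<Rightarrow> 'n vec \<Rightarrow> complex" where
  "lf c = (\<lambda>x. \<Sum>i\<in>UNIV. of_int (c i) * x i)"

definition primitive :: "('n \<Rightarrow> int) \<Rightarrow> bool" where
  "primitive c \<longleftrightarrow> c \<noteq> (\<lambda>i. 0) \<and> (\<forall>k d. c = (\<lambda>i. k * d i) \<longrightarrow> k = 1 \<or> k = -1)"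

definition Delta :: "('n::finite vec \<Rightarrow> 'n vec) set \<Rightarrow> ('n \<Rightarrow> int) set" where
  "Delta W = {c. primitive c \<and>
     (\<exists>s\<in>W. is_reflection s \<and> {x. s x = x} = {x. lf c x = 0})}"

definition Delta_pos :: "('n::finite vec \<Rightarrow> 'n vec) set \<Rightarrow> ('n \<Rightarrow> int) set" where
  "Delta_pos W = {c \<in> Delta W. \<forall>i. c i \<ge> 0}"

definition non_integral :: "('n::finite vec \<Rightarrow> 'n vec) set \<Rightarrow> 'n vec \<Rightarrow> bool" where
  "non_integral W rho \<longleftrightarrow> (\<forall>c\<in>Delta_pos W. lf c rho \<notin> \<int>)"

definition falling :: "complex \<Rightarrow> complex \<Rightarrow> complex" where
  "falling z d = (if d \<in> \<int> then (\<Prod>j<nat \<lfloor>Re d\<rfloor>. (z - of_nat j)) else 1)"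

definition f_tau :: "('n::finite vec \<Rightarrow> 'n vec) set \<Rightarrow> 'n vec \<Rightarrow> 'n vec \<Rightarrow> 'n vec \<Rightarrow> complex" where
  "f_tau W rho tau z =
     (\<Prod>om\<in>Phi W. falling (om z - kval W rho om) (om tau)) /
     (\<Prod>c\<in>Delta W. falling (lf c z) (lf c tau))"

text \<open>The linear form ell, with ell(Sigma-check) in N, given by its coefficients.\<close>
definition ellv :: "('n::finite \<Rightarrow> nat) \<Rightarrow> 'n vec \<Rightarrow> complex" where
  "ellv l = (\<lambda>x. \<Sum>i\<in>UNIV. of_nat (l i) * x i)"

definition level :: "('n::finite \<Rightarrow> nat) \<Rightarrow> 'n wt \<Rightarrow> nat" where
  "level l lam = (\<Sum>i\<in>UNIV. l i * lam i)"

definition Lambda1 :: "('n vec \<Rightarrow> 'n vec) set \<Rightarrow> ('n \<Rightarrow> nat) \<Rightarrow> 'n vec set" where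
  "Lambda1 W l = {w (basis_vec j) | w j. w \<in> W \<and> l j = 1}"

definition Lop :: "('n::finite vec \<Rightarrow> 'n vec) set \<Rightarrow> 'n vec \<Rightarrow> ('n \<Rightarrow> nat) \<Rightarrow> 'n op" where
  "Lop W rho l h = (\<lambda>lam. \<Sum>eta\<in>Lambda1 W l.
      if (\<exists>mu. of_wt mu = (\<lambda>i. of_nat (lam i) - eta i))
      then f_tau W rho eta (shift rho lam) * h (THE mu. of_wt mu = (\<lambda>i. of_nat (lam i) - eta i))
      else 0)"

definition deg_le :: "('n::finite vec \<Rightarrow> complex) \<Rightarrow> nat \<Rightarrow> bool" where
  "deg_le f d \<longleftrightarrow> (\<exists>c. f = (\<lambda>z. \<Sum>a\<in>{a::'n \<Rightarrow> nat. (\<Sum>i\<in>UNIV. a i) \<le> d}.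
                                    c a * (\<Prod>i\<in>UNIV. z i ^ a i)))"

definition polyfun :: "('n::finite vec \<Rightarrow> complex) \<Rightarrow> bool" where
  "polyfun f \<longleftrightarrow> (\<exists>d. deg_le f d)"

definition polydeg :: "('n::finite vec \<Rightarrow> complex) \<Rightarrow> nat" where
  "polydeg f = (LEAST d. deg_le f d)"

definition PW :: "('n::finite vec \<Rightarrow> 'n vec) set \<Rightarrow> ('n vec \<Rightarrow> complex) set" where
  "PW W = {f. polyfun f \<and> (\<forall>w\<in>W. \<forall>z. f (w z) = f z)}"

definition interp_prop :: "('n::finite vec \<Rightarrow> 'n vec) set \<Rightarrow> 'n vec \<Rightarrow> ('n \<Rightarrow> nat) \<Rightarrow> 'n wt
     \<Rightarrow> ('n vec \<Rightarrow> complex) \<Rightarrow> bool" where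
  "interp_prop W rho l lam p \<longleftrightarrow> p \<in> PW W \<and> deg_le p (level l lam) \<and>
     (\<forall>mu. level l mu \<le> level l lam \<longrightarrow> p (shift rho mu) = (if mu = lam then 1 else 0))"

definition pint :: "('n::finite vec \<Rightarrow> 'n vec) set \<Rightarrow> 'n vec \<Rightarrow> ('n \<Rightarrow> nat) \<Rightarrow> 'n wt
     \<Rightarrow> ('n vec \<Rightarrow> complex)" where
  "pint W rho l lam = (THE p. interp_prop W rho l lam p)"

definition restr :: "'n vec \<Rightarrow> ('n vec \<Rightarrow> complex) \<Rightarrow> 'n fn" where
  "restr rho f = (\<lambda>mu. f (shift rho mu))"

definition hatf :: "('n::finite vec \<Rightarrow> 'n vec) set \<Rightarrow> 'n vec \<Rightarrow> ('n \<Rightarrow> nat) \<Rightarrow> 'n fn \<Rightarrow> 'n fn" where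
  "hatf W rho l h = (\<lambda>mu. \<Sum>tau\<in>{tau. pint W rho l tau (shift rho mu) \<noteq> 0}.
       (-1) ^ level l tau * pint W rho l tau (shift rho mu) * h tau)"

definition hatE :: "('n::finite vec \<Rightarrow> 'n vec) set \<Rightarrow> 'n vec \<Rightarrow> ('n \<Rightarrow> nat) \<Rightarrow> 'n op \<Rightarrow> 'n op" where
  "hatE W rho l X = (\<lambda>h. hatf W rho l (X (hatf W rho l h)))"

definition op_add :: "'n op \<Rightarrow> 'n op \<Rightarrow> 'n op" where
  "op_add X Y = (\<lambda>g mu. X g mu + Y g mu)"
definition op_smult :: "complex \<Rightarrow> 'n op \<Rightarrow> 'n op" where
  "op_smult c X = (\<lambda>g mu. c * X g mu)"
definition op_neg :: "'n op \<Rightarrow> 'n op" where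
  "op_neg X = (\<lambda>g mu. - X g mu)"
definition op_zero :: "'n op" where
  "op_zero = (\<lambda>g mu. 0)"

definition mult_op :: "'n vec \<Rightarrow> ('n vec \<Rightarrow> complex) \<Rightarrow> 'n op" where
  "mult_op rho h = (\<lambda>g mu. h (shift rho mu) * g mu)"

definition adL :: "('n::finite vec \<Rightarrow> 'n vec) set \<Rightarrow> 'n vec \<Rightarrow> ('n \<Rightarrow> nat) \<Rightarrow> 'n op \<Rightarrow> 'n op" where
  "adL W rho l X = op_add (Lop W rho l \<circ> X) (op_neg (X \<circ> Lop W rho l))"

text \<open>D_h = sum_{n >= 0} (ad L)^n (m_h) / n!  (the terms vanish for n > deg h).\<close>
definition Dop :: "('n::finite vec \<Rightarrow> 'n vec) set \<Rightarrow> 'n vec \<Rightarrow> ('n \<Rightarrow> nat) \<Rightarrow> ('n vec \<Rightarrow> complex) \<Rightarrow> 'n op" where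
  "Dop W rho l h = (\<lambda>g mu. \<Sum>n\<le>polydeg h. (1 / of_nat (fact n)) * ((adL W rho l ^^ n) (mult_op rho h)) g mu)"

inductive_set alg :: "('n::finite vec \<Rightarrow> 'n vec) set \<Rightarrow> 'n vec \<Rightarrow> ('n \<Rightarrow> nat) \<Rightarrow> 'n op set"
  for W rho l where
  alg_mult: "h \<in> PW W \<Longrightarrow> mult_op rho h \<in> alg W rho l"
| alg_L: "Lop W rho l \<in> alg W rho l"
| alg_id: "id \<in> alg W rho l"
| alg_add: "X \<in> alg W rho l \<Longrightarrow> Y \<in> alg W rho l \<Longrightarrow> op_add X Y \<in> alg W rho l"
| alg_smult: "X \<in> alg W rho l \<Longrightarrow> op_smult c X \<in> alg W rho l"
| alg_comp: "X \<in> alg W rho l \<Longrightarrow> Y \<in> alg W rho l \<Longrightarrow> X \<circ> Y \<in> alg W rho l"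

end

theory Submission
  imports Defs
begin


definition lin :: "'n op \<Rightarrow> bool" where
  "lin X \<longleftrightarrow> (\<forall>g g'. X (\<lambda>v. g v + g' v) = (\<lambda>m. X g m + X g' m)) \<and>
                (\<forall>c g. X (\<lambda>v. c * g v) = (\<lambda>m. c * X g m))"

lemma lin_add: "lin X \<Longrightarrow> X (\<lambda>v. g v + g' v) m = X g m + X g' m"
  unfolding lin_def by metis
lemma lin_smult: "lin X \<Longrightarrow> X (\<lambda>v. c * g v) m = c * X g m"
  unfolding lin_def by metis
lemma lin_zero: "lin X \<Longrightarrow> X (\<lambda>v. 0) m = 0"
  using lin_smult[of X 0 "\<lambda>v. 0" m] by simp
lemma lin_neg: "lin X \<Longrightarrow> X (\<lambda>v. - g v) m = - X g m"
  using lin_smult[of X "-1" g m] by simp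
lemma lin_diff: "lin X \<Longrightarrow> X (\<lambda>v. g v - g' v) m = X g m - X g' m"
  using lin_add[of X g "\<lambda>v. - g' v" m] lin_neg[of X g' m] by simp
lemma lin_sum: assumes "lin X" "finite T"
  shows "X (\<lambda>v. \<Sum>t\<in>T. c t * u t v) m = (\<Sum>t\<in>T. c t * X (u t) m)"
  using assms(2)
proof (induction T arbitrary: m rule: finite_induct)
  case empty then show ?case using lin_zero[OF assms(1)] by simp
next
  case (insert x F)
  have "X (\<lambda>v. \<Sum>t\<in>insert x F. c t * u t v) m = X (\<lambda>v. c x * u x v + (\<Sum>t\<in>F. c t * u t v)) m"
    using insert by simp
  also have "\<dots> = c x * X (u x) m + (\<Sum>t\<in>F. c t * X (u t) m)"
    using lin_add[OF assms(1)] lin_smult[OF assms(1)] insert by simp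
  finally show ?case using insert by simp
qed

lemma lin_comp: "lin X \<Longrightarrow> lin Y \<Longrightarrow> lin (X \<circ> Y)"
  unfolding lin_def by simp

lemma deg0_const: assumes "deg_le (p::'n::finite vec \<Rightarrow> complex) 0" shows "p z = p z'"
proof -
  obtain c where c: "p = (\<lambda>z. \<Sum>a\<in>{a::'n \<Rightarrow> nat. (\<Sum>i\<in>UNIV. a i) \<le> 0}. c a * (\<Prod>i\<in>UNIV. z i ^ a i))"
    using assms unfolding deg_le_def by blast
  have A: "{a::'n \<Rightarrow> nat. (\<Sum>i\<in>UNIV. a i) \<le> 0} = {\<lambda>i. 0}"
    by (auto simp: fun_eq_iff)
  show ?thesis unfolding c A by simp
qed

lemma finite_bfuns: "finite {a::'n::finite \<Rightarrow> nat. \<forall>i. a i \<le> n}"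
proof -
  have "{a::'n \<Rightarrow> nat. \<forall>i. a i \<le> n} = Pi\<^sub>E UNIV (\<lambda>_. {..n})"
    by (auto simp: PiE_UNIV_domain Pi_def)
  thus ?thesis by (simp add: finite_PiE)
qed

lemma of_wt_inj: "of_wt a = of_wt b \<Longrightarrow> a = b"
  by (auto simp: of_wt_def fun_eq_iff)

lemma the_wt: "of_wt v = X \<Longrightarrow> (THE mu. of_wt mu = X) = v"
  using of_wt_inj by (intro the_equality) auto

lemma ellv_of_wt: "ellv l (of_wt v) = of_nat (level l v)"
  by (simp add: ellv_def of_wt_def level_def)

lemma ellv_shift: "ellv l (shift rho v) = ellv l rho + of_nat (level l v)"
  by (simp add: ellv_def shift_def level_def distrib_left sum.distrib)



locale ctx5 =
  fixes W :: "('n::finite vec \<Rightarrow> 'n vec) set" and rho :: "'n vec" and l :: "'n \<Rightarrow> nat"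
  assumes ell_inv: "\<forall>w\<in>W. \<forall>z. ellv l (w z) = ellv l z"
    and known_interp: "\<forall>lam. \<exists>!p. interp_prop W rho l lam p"
    and known_adnil: "\<forall>h\<in>PW W. \<forall>n. n > polydeg h \<longrightarrow> (adL W rho l ^^ n) (mult_op rho h) = op_zero"
    and known_eigen: "\<forall>h\<in>PW W. \<forall>lam. Dop W rho l h (restr rho (pint W rho l lam))
        = (\<lambda>mu. h (shift rho lam) * restr rho (pint W rho l lam) mu)"
begin

abbreviation lev where "lev \<equiv> level l"
abbreviation LL where "LL \<equiv> Lop W rho l"
definition BB :: "nat \<Rightarrow> 'n wt set" where "BB n = {v. lev v \<le> n}"
definition ee :: "'n wt \<Rightarrow> 'n fn" where "ee t = restr rho (pint W rho l t)"
definition PP :: "'n op" where "PP g m = (\<Sum>t\<in>BB (lev m). ee t m * g t)"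
definition pw :: "('n wt \<Rightarrow> complex) \<Rightarrow> 'n op" where "pw k g m = k m * g m"
definition SS :: "'n op" where "SS = pw (\<lambda>m. (-1) ^ lev m)"
definition dl :: "'n wt \<Rightarrow> 'n fn" where "dl t v = (if v = t then 1 else 0)"
definition loc :: "'n op \<Rightarrow> bool" where
  "loc X \<longleftrightarrow> (\<forall>g g' m. (\<forall>v. lev v \<le> lev m \<longrightarrow> g v = g' v) \<longrightarrow> X g m = X g' m)"

lemma interp: "interp_prop W rho l t (pint W rho l t)"
  unfolding pint_def using known_interp by (metis theI')

lemma l_pos: "l i > 0"
proof (rule ccontr)
  assume "\<not> l i > 0" hence l0: "l i = 0" by simp
  let ?z = "\<lambda>_. 0::nat"
  let ?p = "pint W rho l ?z"
  have I: "interp_prop W rho l ?z ?p" by (rule interp)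
  have lev0: "level l ?z = 0" by (simp add: level_def)
  define e where "e = (\<lambda>j. if j = i then 1 else 0::nat)"
  have leve: "level l e = 0" using l0 by (simp add: level_def e_def if_distrib cong: if_cong)
  have ne: "e \<noteq> ?z" by (auto simp: e_def fun_eq_iff)
  from I have d: "deg_le ?p 0" and v: "\<forall>mu. level l mu \<le> 0 \<longrightarrow> ?p (shift rho mu) = (if mu = ?z then 1 else 0)"
    unfolding interp_prop_def lev0 by auto
  have "?p (shift rho ?z) = 1" using v lev0 by simp
  moreover have "?p (shift rho e) = 0" using v leve ne by simp
  moreover have "?p (shift rho ?z) = ?p (shift rho e)" using deg0_const[OF d] .
  ultimately show False by simp
qed

lemma finite_BB: "finite (BB n)"
proof -
  have "BB n \<subseteq> {a. \<forall>i. a i \<le> n}"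
  proof safe
    fix v i assume "v \<in> BB n"
    hence "lev v \<le> n" by (simp add: BB_def)
    moreover have "l i * v i \<le> lev v" unfolding level_def by (rule member_le_sum) auto
    moreover have "v i \<le> l i * v i" using l_pos[of i] by simp
    ultimately show "v i \<le> n" by linarith
  qed
  thus ?thesis using finite_subset finite_bfuns by blast
qed

lemma mem_BB[simp]: "v \<in> BB n \<longleftrightarrow> lev v \<le> n" by (simp add: BB_def)

lemma ee_tri: "lev m \<le> lev t \<Longrightarrow> ee t m = (if m = t then 1 else 0)"
  using interp[of t] unfolding interp_prop_def ee_def restr_def by auto

lemma ee_low: "lev m < lev t \<Longrightarrow> ee t m = 0"
  using ee_tri[of m t] by auto

lemma hatf_eq: "hatf W rho l g = PP (SS g)"
proof (rule ext)
  fix m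
  let ?F = "{tau. pint W rho l tau (shift rho m) \<noteq> 0}"
  have sub: "?F \<subseteq> BB (lev m)"
  proof
    fix t assume "t \<in> ?F"
    hence "ee t m \<noteq> 0" by (simp add: ee_def restr_def)
    thus "t \<in> BB (lev m)" using ee_low[of m t] by force
  qed
  show "hatf W rho l g m = PP (SS g) m"
    unfolding hatf_def PP_def SS_def pw_def
    by (rule sum.mono_neutral_cong_left[OF finite_BB sub]) (auto simp: ee_def restr_def)
qed

lemma loc_comp: assumes "loc X" "loc Y" shows "loc (X \<circ> Y)"
  unfolding loc_def comp_def
proof (intro allI impI)
  fix g g' :: "'n fn" and m assume a: "\<forall>v. lev v \<le> lev m \<longrightarrow> g v = g' v"
  have "\<And>v. lev v \<le> lev m \<Longrightarrow> Y g v = Y g' v"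
  proof -
    fix v assume "lev v \<le> lev m"
    hence "\<forall>u. lev u \<le> lev v \<longrightarrow> g u = g' u" using a by auto
    thus "Y g v = Y g' v" using assms(2) unfolding loc_def by blast
  qed
  thus "X (Y g) m = X (Y g') m" using assms(1) unfolding loc_def by blast
qed

lemma pw_lin: "lin (pw k)" unfolding lin_def pw_def by (simp add: fun_eq_iff algebra_simps)
lemma pw_loc: "loc (pw k)" unfolding loc_def pw_def by simp

lemma rep: assumes "lin X" "loc X"
  shows "X g m = (\<Sum>t\<in>BB (lev m). g t * X (dl t) m)"
proof -
  have eq: "\<And>v. lev v \<le> lev m \<Longrightarrow> g v = (\<Sum>t\<in>BB (lev m). g t * dl t v)"
    by (simp add: dl_def if_distrib finite_BB cong: if_cong)
  have "X g m = X (\<lambda>v. \<Sum>t\<in>BB (lev m). g t * dl t v) m"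
    using assms(2)[unfolded loc_def, rule_format, OF eq] .
  also have "\<dots> = (\<Sum>t\<in>BB (lev m). g t * X (dl t) m)"
    by (rule lin_sum[OF assms(1) finite_BB])
  finally show ?thesis .
qed

lemma ext_dl: assumes "lin X" "loc X" "lin Y" "loc Y" "\<And>t. X (dl t) = Y (dl t)"
  shows "X = Y"
proof (intro ext)
  fix g m
  show "X g m = Y g m" unfolding rep[OF assms(1,2), of g m] rep[OF assms(3,4), of g m] assms(5) ..
qed

lemma PP_lin: "lin PP"
  unfolding lin_def PP_def by (simp add: fun_eq_iff algebra_simps sum.distrib sum_distrib_left)
lemma PP_loc: "loc PP"
  unfolding loc_def PP_def by (auto intro!: sum.cong)

lemma PP_dl: "PP (dl t) = ee t"
proof (rule ext)
  fix m
  have "PP (dl t) m = (if t \<in> BB (lev m) then ee t m else 0)"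
    unfolding PP_def dl_def by (simp add: if_distrib finite_BB cong: if_cong)
  also have "\<dots> = ee t m" using ee_low[of m t] by auto
  finally show "PP (dl t) m = ee t m" .
qed

end


context ctx5 begin

lemma SS_apply: "SS g m = (-1) ^ lev m * g m" by (simp add: SS_def pw_def)

lemma ell_eta: assumes "eta \<in> Lambda1 W l" shows "ellv l eta = 1"
proof -
  obtain w j where w: "w \<in> W" "l j = 1" "eta = w (basis_vec j)" using assms unfolding Lambda1_def by blast
  have "ellv l eta = ellv l (basis_vec j)" using ell_inv w by simp
  also have "\<dots> = of_nat (l j)" by (simp add: ellv_def basis_vec_def if_distrib cong: if_cong)
  finally show ?thesis using w by simp
qed

lemma lev_pred: assumes "eta \<in> Lambda1 W l" "of_wt v = (\<lambda>i. of_nat (m i) - eta i)" shows "lev v + 1 = lev m"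
proof -
  have "(of_nat (lev v) :: complex) = ellv l (\<lambda>i. of_nat (m i) - eta i)" using assms(2) ellv_of_wt by metis
  also have "\<dots> = of_nat (lev m) - ellv l eta"
    by (simp add: ellv_def level_def right_diff_distrib sum_subtractf)
  also have "\<dots> = of_nat (lev m) - 1" using ell_eta[OF assms(1)] by simp
  finally have "(of_nat (lev v + 1) :: complex) = of_nat (lev m)" by simp
  thus ?thesis by (simp only: of_nat_eq_iff)
qed

lemma L_cong: assumes "\<And>v. lev v + 1 = lev m \<Longrightarrow> g v = g' v" shows "LL g m = LL g' m"
  unfolding Lop_def
proof (rule sum.cong[OF refl])
  fix eta assume eta: "eta \<in> Lambda1 W l"
  show "(if \<exists>mu. of_wt mu = (\<lambda>i. of_nat (m i) - eta i) then f_tau W rho eta (shift rho m) * g (THE mu. of_wt mu = (\<lambda>i. of_nat (m i) - eta i)) else 0) =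
        (if \<exists>mu. of_wt mu = (\<lambda>i. of_nat (m i) - eta i) then f_tau W rho eta (shift rho m) * g' (THE mu. of_wt mu = (\<lambda>i. of_nat (m i) - eta i)) else 0)"
  proof (cases "\<exists>mu. of_wt mu = (\<lambda>i. of_nat (m i) - eta i)")
    case True
    then obtain v where v: "of_wt v = (\<lambda>i. of_nat (m i) - eta i)" by blast
    show ?thesis using True the_wt[OF v] assms[OF lev_pred[OF eta v]] by simp
  qed simp
qed

lemma L_lin: "lin LL"
  unfolding lin_def
proof (intro conjI allI)
  fix g g' :: "'n fn"
  show "LL (\<lambda>v. g v + g' v) = (\<lambda>m. LL g m + LL g' m)"
    unfolding Lop_def sum.distrib[symmetric] by (rule ext, intro sum.cong refl) (simp add: distrib_left)
next
  fix c and g :: "'n fn"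
  show "LL (\<lambda>v. c * g v) = (\<lambda>m. c * LL g m)"
    unfolding Lop_def sum_distrib_left by (rule ext, intro sum.cong refl) (simp add: mult_ac)
qed

lemma L_loc: "loc LL"
  unfolding loc_def by (auto intro!: L_cong)

lemma L_strict: assumes "\<And>v. lev v < lev m \<Longrightarrow> g v = 0" shows "LL g m = 0"
proof -
  have "LL g m = LL (\<lambda>v. 0) m" by (rule L_cong) (auto intro: assms)
  thus ?thesis using lin_zero[OF L_lin] by simp
qed

lemma L_N: "LL (\<lambda>v. of_nat (lev v) * g v) m = (of_nat (lev m) - 1) * LL g m"
proof -
  have "LL (\<lambda>v. of_nat (lev v) * g v) m = LL (\<lambda>v. (of_nat (lev m) - 1) * g v) m"
  proof (rule L_cong)
    fix v assume "lev v + 1 = lev m" hence "lev m = lev v + 1" by simp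
    thus "of_nat (lev v) * g v = (of_nat (lev m) - 1) * g v" by simp
  qed
  thus ?thesis using lin_smult[OF L_lin] by simp
qed

lemma L_S: "LL (SS g) m = - ((-1) ^ lev m * LL g m)"
proof (cases "lev m")
  case 0
  have "LL (SS g) m = 0" "LL g m = 0" by (rule L_strict, simp add: 0)+
  thus ?thesis by simp
next
  case (Suc k)
  have "LL (SS g) m = LL (\<lambda>v. (-1) ^ k * g v) m"
    by (rule L_cong) (simp add: SS_apply Suc)
  thus ?thesis using lin_smult[OF L_lin] Suc by simp
qed

lemma L_ell: "LL (\<lambda>v. ellv l (shift rho v) * g v) m = (ellv l (shift rho m) - 1) * LL g m"
proof -
  have "LL (\<lambda>v. ellv l (shift rho v) * g v) m = LL (\<lambda>v. (ellv l (shift rho m) - 1) * g v) m"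
  proof (rule L_cong)
    fix v assume "lev v + 1 = lev m" hence "lev m = lev v + 1" by simp
    thus "ellv l (shift rho v) * g v = (ellv l (shift rho m) - 1) * g v" by (simp add: ellv_shift)
  qed
  thus ?thesis using lin_smult[OF L_lin] by simp
qed

lemma ell_poly: "deg_le (ellv l) 1"
proof -
  let ?A = "{a::'n \<Rightarrow> nat. (\<Sum>i\<in>UNIV. a i) \<le> 1}"
  define ei where "ei i = (\<lambda>j::'n. if j = i then 1 else 0::nat)" for i :: 'n
  define c where "c a = (\<Sum>i\<in>UNIV. if a = ei i then (of_nat (l i)::complex) else 0)" for a
  have finA: "finite ?A"
  proof (rule finite_subset[OF _ finite_bfuns[of 1]], safe)
    fix a :: "'n \<Rightarrow> nat" and i assume "sum a UNIV \<le> 1"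
    moreover have "a i \<le> sum a UNIV" by (rule member_le_sum) auto
    ultimately show "a i \<le> 1" by simp
  qed
  have eiA: "ei i \<in> ?A" for i by (simp add: ei_def)
  have prod_ei: "(\<Prod>j\<in>UNIV. z j ^ ei i j) = z i" for z i
    by (simp add: ei_def if_distrib cong: if_cong)
  have "ellv l = (\<lambda>z. \<Sum>a\<in>?A. c a * (\<Prod>j\<in>UNIV. z j ^ a j))"
  proof
    fix z :: "'n vec"
    have "(\<Sum>a\<in>?A. c a * (\<Prod>j\<in>UNIV. z j ^ a j))
        = (\<Sum>a\<in>?A. \<Sum>i\<in>UNIV. if a = ei i then of_nat (l i) * (\<Prod>j\<in>UNIV. z j ^ a j) else 0)"
      unfolding c_def sum_distrib_right by (intro sum.cong refl) auto
    also have "\<dots> = (\<Sum>i\<in>UNIV. \<Sum>a\<in>?A. if a = ei i then of_nat (l i) * (\<Prod>j\<in>UNIV. z j ^ a j) else 0)"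
      by (rule sum.swap)
    also have "\<dots> = (\<Sum>i\<in>UNIV. of_nat (l i) * z i)"
      using finA eiA by (simp add: sum.delta prod_ei)
    finally show "ellv l z = (\<Sum>a\<in>?A. c a * (\<Prod>j\<in>UNIV. z j ^ a j))" by (simp add: ellv_def)
  qed
  thus ?thesis unfolding deg_le_def by blast
qed

lemma ell_PW: "ellv l \<in> PW W"
  unfolding PW_def polyfun_def using ell_poly ell_inv by blast

lemma adL_m_ell: "adL W rho l (mult_op rho (ellv l)) = op_neg LL"
proof (intro ext)
  fix g m
  show "adL W rho l (mult_op rho (ellv l)) g m = op_neg LL g m"
    unfolding adL_def op_add_def op_neg_def mult_op_def comp_def L_ell by (simp add: algebra_simps)
qed

lemma adL_negL: "adL W rho l (op_neg LL) = op_zero"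
  by (auto simp: fun_eq_iff adL_def op_add_def op_neg_def op_zero_def lin_neg[OF L_lin])

lemma adL_zero: "adL W rho l op_zero = op_zero"
  by (auto simp: fun_eq_iff adL_def op_add_def op_neg_def op_zero_def lin_zero[OF L_lin])

lemma adL_pow: "(adL W rho l ^^ Suc (Suc k)) (mult_op rho (ellv l)) = op_zero"
  by (induction k) (simp_all add: adL_m_ell adL_negL adL_zero)

lemma Dop_ell: "Dop W rho l (ellv l) g m = ellv l (shift rho m) * g m - LL g m"
proof (cases "polydeg (ellv l) = 0")
  case True
  have "(adL W rho l ^^ 1) (mult_op rho (ellv l)) = op_zero"
    using known_adnil ell_PW True by (metis zero_less_one)
  hence "op_neg LL = op_zero" using adL_m_ell by simp
  hence "LL g m = 0" unfolding op_neg_def op_zero_def by (metis neg_equal_0_iff_equal)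
  thus ?thesis unfolding Dop_def True by (simp add: mult_op_def)
next
  case False
  let ?t = "\<lambda>n. (1 / of_nat (fact n)) * ((adL W rho l ^^ n) (mult_op rho (ellv l))) g m"
  have "(\<Sum>n\<le>polydeg (ellv l). ?t n) = (\<Sum>n\<in>{0,1}. ?t n)"
  proof (rule sum.mono_neutral_right)
    show "\<forall>i\<in>{..polydeg (ellv l)} - {0, 1}. ?t i = 0"
    proof
      fix i assume "i \<in> {..polydeg (ellv l)} - {0, 1}"
      hence "2 \<le> i" by auto
      hence "i = Suc (Suc (i - 2))" by simp
      thus "?t i = 0" using adL_pow[of "i - 2"] by (metis (no_types, lifting) op_zero_def mult_zero_right)
    qed
  qed (use False in auto)
  also have "\<dots> = ellv l (shift rho m) * g m - LL g m"
    by (simp add: adL_m_ell op_neg_def) (simp add: mult_op_def)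
  finally show ?thesis unfolding Dop_def .
qed

lemma L_ee: "LL (ee t) m = (of_nat (lev m) - of_nat (lev t)) * ee t m"
proof -
  have "Dop W rho l (ellv l) (ee t) m = ellv l (shift rho t) * ee t m"
    using known_eigen ell_PW unfolding ee_def by simp
  hence "ellv l (shift rho m) * ee t m - LL (ee t) m = ellv l (shift rho t) * ee t m"
    by (simp add: Dop_ell)
  thus ?thesis by (simp add: ellv_shift algebra_simps)
qed

end


lemma lin_addop: "lin X \<Longrightarrow> lin Y \<Longrightarrow> lin (op_add X Y)"
  unfolding lin_def op_add_def by (simp add: fun_eq_iff algebra_simps)
lemma lin_negop: "lin X \<Longrightarrow> lin (op_neg X)"
  unfolding lin_def op_neg_def by (simp add: fun_eq_iff algebra_simps)

context ctx5 begin

lemma loc_addop: "loc X \<Longrightarrow> loc Y \<Longrightarrow> loc (op_add X Y)"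
  unfolding loc_def op_add_def by metis
lemma loc_negop: "loc X \<Longrightarrow> loc (op_neg X)"
  unfolding loc_def op_neg_def by metis

lemma E1: "LL (PP g) m = of_nat (lev m) * PP g m - PP (\<lambda>v. of_nat (lev v) * g v) m"
proof -
  have li: "lin (LL \<circ> PP)" by (rule lin_comp[OF L_lin PP_lin])
  have lo: "loc (LL \<circ> PP)" by (rule loc_comp[OF L_loc PP_loc])
  have "LL (PP g) m = (\<Sum>t\<in>BB (lev m). g t * (LL \<circ> PP) (dl t) m)"
    using rep[OF li lo, of g m] by simp
  also have "\<dots> = (\<Sum>t\<in>BB (lev m). g t * ((of_nat (lev m) - of_nat (lev t)) * ee t m))"
    by (simp add: PP_dl L_ee)
  also have "\<dots> = of_nat (lev m) * PP g m - PP (\<lambda>v. of_nat (lev v) * g v) m"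
    unfolding PP_def sum_distrib_left sum_subtractf[symmetric]
    by (intro sum.cong refl) (simp add: algebra_simps)
  finally show ?thesis .
qed

lemma Ldl_zero: assumes "lev v \<noteq> lev t + 1" shows "LL (dl t) v = 0"
proof -
  have "LL (dl t) v = LL (\<lambda>_. 0) v" by (rule L_cong) (use assms in \<open>auto simp: dl_def\<close>)
  thus ?thesis using lin_zero[OF L_lin] by simp
qed

lemma L_ee_fun: "LL (ee t) = (\<lambda>v. (of_nat (lev v) - of_nat (lev t)) * ee t v)"
  by (rule ext) (rule L_ee)

lemma Ldl_fun: "(\<lambda>v. of_nat (lev v) * LL (dl t) v) = (\<lambda>v. (of_nat (lev t) + 1) * LL (dl t) v)"
proof (rule ext)
  fix v show "of_nat (lev v) * LL (dl t) v = (of_nat (lev t) + 1) * LL (dl t) v"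
    by (cases "lev v = lev t + 1") (simp_all add: Ldl_zero)
qed

lemma C_dl: "LL (ee t) m = PP (LL (dl t)) m"
proof (induction "lev m" arbitrary: m rule: less_induct)
  case less
  define c where "c = (\<lambda>v. LL (ee t) v - PP (LL (dl t)) v)"
  have IH: "\<And>v. lev v < lev m \<Longrightarrow> c v = 0" using less unfolding c_def by simp
  have Lc0: "LL c m = 0" by (rule L_strict) (rule IH)
  have k1: "LL (LL (ee t)) m = (of_nat (lev m) - 1 - of_nat (lev t)) * LL (ee t) m"
  proof -
    have "LL (LL (ee t)) m = LL (\<lambda>v. of_nat (lev v) * ee t v - of_nat (lev t) * ee t v) m"
      unfolding L_ee_fun by (simp add: algebra_simps)
    also have "\<dots> = (of_nat (lev m) - 1) * LL (ee t) m - of_nat (lev t) * LL (ee t) m"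
      by (simp add: lin_diff[OF L_lin] lin_smult[OF L_lin] L_N)
    finally show ?thesis by (simp add: algebra_simps)
  qed
  have k2: "LL (PP (LL (dl t))) m = (of_nat (lev m) - of_nat (lev t) - 1) * PP (LL (dl t)) m"
    unfolding E1 Ldl_fun lin_smult[OF PP_lin] by (simp add: algebra_simps)
  have "LL c m = LL (LL (ee t)) m - LL (PP (LL (dl t))) m"
    unfolding c_def by (rule lin_diff[OF L_lin])
  hence eq: "(of_nat (lev m) - of_nat (lev t) - 1) * c m = 0"
    using Lc0 k1 k2 unfolding c_def by (simp add: algebra_simps)
  show ?case
  proof (cases "lev m = lev t + 1")
    case False
    hence "(of_nat (lev m) :: complex) \<noteq> of_nat (lev t + 1)" by (metis of_nat_eq_iff)
    hence "(of_nat (lev m) - of_nat (lev t) - 1 :: complex) \<noteq> 0" by (simp add: algebra_simps)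
    with eq have "c m = 0" by simp
    thus ?thesis unfolding c_def by simp
  next
    case True
    have a: "LL (ee t) m = LL (dl t) m"
    proof (rule L_cong)
      fix v assume "lev v + 1 = lev m"
      hence "lev v = lev t" using True by simp
      thus "ee t v = dl t v" using ee_tri[of v t] by (simp add: dl_def)
    qed
    have b: "PP (LL (dl t)) m = (\<Sum>s\<in>BB (lev m). if s = m then LL (dl t) m else 0)"
      unfolding PP_def
    proof (intro sum.cong refl)
      fix s assume s: "s \<in> BB (lev m)"
      show "ee s m * LL (dl t) s = (if s = m then LL (dl t) m else 0)"
      proof (cases "lev s = lev m")
        case True
        thus ?thesis using ee_tri[of m s] by auto
      next
        case False
        hence "lev s \<noteq> lev t + 1" "s \<noteq> m" using s \<open>lev m = lev t + 1\<close> by auto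
        thus ?thesis using Ldl_zero by simp
      qed
    qed
    also have "\<dots> = LL (dl t) m" by (simp add: finite_BB)
    finally show ?thesis using a by simp
  qed
qed

lemma E2: "PP (LL g) = LL (PP g)"
proof -
  have "PP \<circ> LL = LL \<circ> PP"
  proof (rule ext_dl)
    show "lin (PP \<circ> LL)" by (rule lin_comp[OF PP_lin L_lin])
    show "loc (PP \<circ> LL)" by (rule loc_comp[OF PP_loc L_loc])
    show "lin (LL \<circ> PP)" by (rule lin_comp[OF L_lin PP_lin])
    show "loc (LL \<circ> PP)" by (rule loc_comp[OF L_loc PP_loc])
    fix t show "(PP \<circ> LL) (dl t) = (LL \<circ> PP) (dl t)"
      by (rule ext) (simp add: PP_dl C_dl)
  qed
  thus ?thesis by (metis comp_apply)
qed

lemma SS_lin: "lin SS" unfolding SS_def by (rule pw_lin)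
lemma SS_loc: "loc SS" unfolding SS_def by (rule pw_loc)
lemma id_lin: "lin id" unfolding lin_def by simp
lemma id_loc: "loc id" unfolding loc_def by simp

lemma R_id: "PP (SS (PP (SS g))) = g"
proof -
  have "PP \<circ> SS \<circ> PP \<circ> SS = id"
  proof (rule ext_dl)
    show "lin (PP \<circ> SS \<circ> PP \<circ> SS)" by (intro lin_comp PP_lin SS_lin)
    show "loc (PP \<circ> SS \<circ> PP \<circ> SS)" by (intro loc_comp PP_loc SS_loc)
    show "lin id" by (rule id_lin)
    show "loc id" by (rule id_loc)
    fix t
    have sdl: "SS (dl t) = (\<lambda>v. (-1) ^ lev t * dl t v)"
      by (rule ext) (simp add: SS_apply dl_def)
    have psdl: "PP (SS (dl t)) = (\<lambda>v. (-1) ^ lev t * ee t v)"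
      by (rule ext) (simp add: sdl lin_smult[OF PP_lin] PP_dl)
    define u where "u = SS (PP (SS (dl t)))"
    have u: "u v = (-1) ^ lev v * ((-1) ^ lev t * ee t v)" for v
      by (simp add: u_def psdl SS_apply)
    have Lu: "LL u = (\<lambda>v. of_nat (lev t) * u v - of_nat (lev v) * u v)"
    proof (rule ext)
      fix v
      have "LL u v = - ((-1) ^ lev v * LL (\<lambda>v. (-1) ^ lev t * ee t v) v)"
        unfolding u_def L_S psdl ..
      also have "\<dots> = - ((-1) ^ lev v * ((-1) ^ lev t * ((of_nat (lev v) - of_nat (lev t)) * ee t v)))"
        by (simp add: lin_smult[OF L_lin] L_ee)
      also have "\<dots> = of_nat (lev t) * u v - of_nat (lev v) * u v"
        by (simp add: u algebra_simps)
      finally show "LL u v = of_nat (lev t) * u v - of_nat (lev v) * u v" .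
    qed
    show "(PP \<circ> SS \<circ> PP \<circ> SS) (dl t) = id (dl t)"
    proof (rule ext)
      fix m
      have "LL (PP u) m = PP (LL u) m" using E2 by simp
      hence "of_nat (lev m) * PP u m - PP (\<lambda>v. of_nat (lev v) * u v) m
           = of_nat (lev t) * PP u m - PP (\<lambda>v. of_nat (lev v) * u v) m"
        unfolding E1 Lu by (simp add: lin_diff[OF PP_lin] lin_smult[OF PP_lin])
      hence key: "(of_nat (lev m) - of_nat (lev t)) * PP u m = 0" by (simp add: algebra_simps)
      have "PP u m = dl t m"
      proof (cases "lev m = lev t")
        case False
        hence "(of_nat (lev m) - of_nat (lev t) :: complex) \<noteq> 0" by simp
        hence "PP u m = 0" using key by simp
        moreover have "m \<noteq> t" using False by auto
        ultimately show ?thesis by (simp add: dl_def)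
      next
        case True
        have "PP u m = (\<Sum>s\<in>BB (lev m). if s = m then u m else 0)"
          unfolding PP_def
        proof (intro sum.cong refl)
          fix s assume s: "s \<in> BB (lev m)"
          show "ee s m * u s = (if s = m then u m else 0)"
          proof (cases "lev s = lev m")
            case True
            thus ?thesis using ee_tri[of m s] by auto
          next
            case False
            hence "lev s < lev t" "s \<noteq> m" using s \<open>lev m = lev t\<close> by auto
            thus ?thesis using ee_low[of s t] by (simp add: u)
          qed
        qed
        also have "\<dots> = u m" by (simp add: finite_BB)
        also have "\<dots> = ee t m" using True by (simp add: u power_add[symmetric])
        also have "\<dots> = dl t m" using ee_tri[of m t] True by (simp add: dl_def)
        finally show ?thesis .
      qed
      thus "(PP \<circ> SS \<circ> PP \<circ> SS) (dl t) m = id (dl t) m" by (simp add: u_def)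
    qed
  qed
  thus ?thesis by (metis comp_apply id_apply)
qed

end


lemma lin_sumop: fixes A :: "'i \<Rightarrow> 'a op" assumes "\<And>n. n \<in> T \<Longrightarrow> lin (A n)"
  shows "lin (\<lambda>g m. \<Sum>n\<in>T. c n * A n g m)"
  unfolding lin_def
proof (intro conjI allI ext)
  fix g g' :: "'a fn" and m
  show "(\<Sum>n\<in>T. c n * A n (\<lambda>v. g v + g' v) m) = (\<Sum>n\<in>T. c n * A n g m) + (\<Sum>n\<in>T. c n * A n g' m)"
    unfolding sum.distrib[symmetric] by (intro sum.cong refl) (simp add: lin_add[OF assms] algebra_simps)
next
  fix d and g :: "'a fn" and m
  show "(\<Sum>n\<in>T. c n * A n (\<lambda>v. d * g v) m) = d * (\<Sum>n\<in>T. c n * A n g m)"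
    unfolding sum_distrib_left by (intro sum.cong refl) (simp add: lin_smult[OF assms] algebra_simps)
qed

lemma alg_negop: "X \<in> alg W rho l \<Longrightarrow> op_neg X \<in> alg W rho l"
proof -
  assume "X \<in> alg W rho l"
  hence "op_smult (-1) X \<in> alg W rho l" by (rule alg_smult)
  moreover have "op_smult (-1) X = op_neg X" by (simp add: fun_eq_iff op_smult_def op_neg_def)
  ultimately show ?thesis by simp
qed

lemma alg_sumop: assumes "finite T" "\<And>n. n \<in> T \<Longrightarrow> A n \<in> alg W rho l"
  shows "(\<lambda>g m. \<Sum>n\<in>T. c n * A n g m) \<in> alg W rho l"
  using assms
proof (induction T rule: finite_induct)
  case empty
  have "op_smult 0 id \<in> alg W rho l" by (intro alg_smult alg_id)
  moreover have "op_smult 0 id = (\<lambda>g m. \<Sum>n\<in>{}. c n * A n g m)" by (simp add: fun_eq_iff op_smult_def)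
  ultimately show ?case by simp
next
  case (insert x F)
  have "op_add (op_smult (c x) (A x)) (\<lambda>g m. \<Sum>n\<in>F. c n * A n g m) \<in> alg W rho l"
    using insert by (intro alg_add alg_smult) auto
  moreover have "op_add (op_smult (c x) (A x)) (\<lambda>g m. \<Sum>n\<in>F. c n * A n g m) = (\<lambda>g m. \<Sum>n\<in>insert x F. c n * A n g m)"
    using insert by (simp add: fun_eq_iff op_smult_def op_add_def)
  ultimately show ?case by simp
qed

lemma alg_adL: "X \<in> alg W rho l \<Longrightarrow> adL W rho l X \<in> alg W rho l"
  unfolding adL_def by (intro alg_add alg_comp alg_negop alg_L)

lemma alg_pow: "X \<in> alg W rho l \<Longrightarrow> (adL W rho l ^^ n) X \<in> alg W rho l"
  by (induction n) (simp_all add: alg_adL)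

lemma alg_Dop: "h \<in> PW W \<Longrightarrow> Dop W rho l h \<in> alg W rho l"
  unfolding Dop_def by (intro alg_sumop alg_pow alg_mult) auto

context ctx5 begin

lemma adL_lin: "lin X \<Longrightarrow> lin (adL W rho l X)"
  unfolding adL_def by (intro lin_addop lin_negop lin_comp L_lin)
lemma adL_loc: "loc X \<Longrightarrow> loc (adL W rho l X)"
  unfolding adL_def by (intro loc_addop loc_negop loc_comp L_loc)

lemma mult_pw: "mult_op rho h = pw (\<lambda>m. h (shift rho m))"
  by (simp add: fun_eq_iff mult_op_def pw_def)

lemma Dop_lin: "lin (Dop W rho l h)"
proof -
  have "lin ((adL W rho l ^^ n) (mult_op rho h))" for n
    by (induction n) (simp_all add: adL_lin mult_pw pw_lin)
  thus ?thesis unfolding Dop_def by (intro lin_sumop)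
qed

lemma Dop_loc: "loc (Dop W rho l h)"
proof -
  have L: "loc ((adL W rho l ^^ n) (mult_op rho h))" for n
    by (induction n) (simp_all add: adL_loc mult_pw pw_loc)
  show ?thesis unfolding Dop_def loc_def
  proof (intro allI impI)
    fix g g' :: "'n fn" and m assume a: "\<forall>v. lev v \<le> lev m \<longrightarrow> g v = g' v"
    show "(\<Sum>n\<le>polydeg h. 1 / of_nat (fact n) * (adL W rho l ^^ n) (mult_op rho h) g m) =
          (\<Sum>n\<le>polydeg h. 1 / of_nat (fact n) * (adL W rho l ^^ n) (mult_op rho h) g' m)"
      using L a unfolding loc_def by (intro sum.cong refl) auto
  qed
qed

lemma Dop_P: assumes "h \<in> PW W" shows "Dop W rho l h \<circ> PP = PP \<circ> mult_op rho h"
proof (rule ext_dl)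
  show "lin (Dop W rho l h \<circ> PP)" by (intro lin_comp Dop_lin PP_lin)
  show "loc (Dop W rho l h \<circ> PP)" by (intro loc_comp Dop_loc PP_loc)
  show "lin (PP \<circ> mult_op rho h)" by (simp add: lin_comp PP_lin mult_pw pw_lin)
  show "loc (PP \<circ> mult_op rho h)" by (simp add: loc_comp PP_loc mult_pw pw_loc)
  fix t
  have md: "mult_op rho h (dl t) = (\<lambda>v. h (shift rho t) * dl t v)"
    by (rule ext) (simp add: mult_op_def dl_def)
  have "Dop W rho l h (ee t) = (\<lambda>m. h (shift rho t) * ee t m)"
    using known_eigen assms unfolding ee_def by simp
  thus "(Dop W rho l h \<circ> PP) (dl t) = (PP \<circ> mult_op rho h) (dl t)"
    by (auto simp: PP_dl md lin_smult[OF PP_lin] fun_eq_iff)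
qed

lemma HH: "hatf W rho l (hatf W rho l g) = g"
  by (simp add: hatf_eq R_id)

lemma hat_lin: "lin (hatf W rho l)"
proof -
  have "hatf W rho l = PP \<circ> SS" by (simp add: fun_eq_iff hatf_eq)
  thus ?thesis by (simp add: lin_comp PP_lin SS_lin)
qed

lemma hat_L: "hatf W rho l (LL (hatf W rho l g)) = op_neg LL g"
proof -
  have sl: "SS (LL x) = (\<lambda>m. - LL (SS x) m)" for x
    by (rule ext) (simp add: SS_apply L_S)
  have "hatf W rho l (LL (hatf W rho l g)) = PP (\<lambda>m. - LL (SS (PP (SS g))) m)"
    by (simp add: hatf_eq sl)
  also have "\<dots> = (\<lambda>m. - PP (LL (SS (PP (SS g)))) m)"
    by (rule ext) (rule lin_neg[OF PP_lin])
  also have "\<dots> = (\<lambda>m. - LL g m)" by (simp add: E2 R_id)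
  finally show ?thesis by (simp add: op_neg_def)
qed

lemma hat_m: assumes "h \<in> PW W" shows "hatf W rho l (mult_op rho h (hatf W rho l g)) = Dop W rho l h g"
proof -
  have sm: "SS (mult_op rho h y) = mult_op rho h (SS y)" for y
    by (simp add: fun_eq_iff SS_apply mult_op_def)
  have "hatf W rho l (mult_op rho h (hatf W rho l g)) = (PP \<circ> mult_op rho h) (SS (PP (SS g)))"
    by (simp add: hatf_eq sm)
  also have "\<dots> = Dop W rho l h (PP (SS (PP (SS g))))"
    using fun_cong[OF Dop_P[OF assms], of "SS (PP (SS g))"] by simp
  also have "\<dots> = Dop W rho l h g" by (simp add: R_id)
  finally show ?thesis .
qed

end

theorem theorem5p3:
  fixes W :: "('n::finite vec \<Rightarrow> 'n vec) set"
    and l :: "'n \<Rightarrow> nat"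
    and rho :: "'n vec"
  assumes W: "finite_reflection_group W"
    and ell_inv: "\<forall>w\<in>W. \<forall>z. ellv l (w z) = ellv l z"
    and rho_V0: "rho \<in> V0 W"
    and rho_nonint: "non_integral W rho"
    \<comment> \<open>known facts quoted in the context\<close>
    and known_interp: "\<forall>lam. \<exists>!p. interp_prop W rho l lam p"
    and known_finite: "\<forall>mu. finite {tau. pint W rho l tau (shift rho mu) \<noteq> 0}"
    and known_fvanish: "\<forall>lam. \<forall>eta\<in>Lambda1 W l.
        \<not> (\<exists>mu. of_wt mu = (\<lambda>i. of_nat (lam i) - eta i)) \<longrightarrow> f_tau W rho eta (shift rho lam) = 0"
    and known_adnil: "\<forall>h\<in>PW W. \<forall>n. n > polydeg h \<longrightarrow> (adL W rho l ^^ n) (mult_op rho h) = op_zero"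
    and known_eigen: "\<forall>h\<in>PW W. \<forall>lam. Dop W rho l h (restr rho (pint W rho l lam))
        = (\<lambda>mu. h (shift rho lam) * restr rho (pint W rho l lam) mu)"
  shows "(\<forall>X\<in>alg W rho l. hatE W rho l X \<in> alg W rho l \<and> hatE W rho l (hatE W rho l X) = X)
       \<and> bij_betw (hatE W rho l) (alg W rho l) (alg W rho l)
       \<and> hatE W rho l id = id
       \<and> (\<forall>X\<in>alg W rho l. \<forall>Y\<in>alg W rho l.
            hatE W rho l (X \<circ> Y) = hatE W rho l X \<circ> hatE W rho l Y
          \<and> hatE W rho l (op_add X Y) = op_add (hatE W rho l X) (hatE W rho l Y))
       \<and> (\<forall>c. \<forall>X\<in>alg W rho l. hatE W rho l (op_smult c X) = op_smult c (hatE W rho l X))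
       \<and> (\<forall>h\<in>PW W. hatE W rho l (mult_op rho h) = Dop W rho l h)
       \<and> hatE W rho l (Lop W rho l) = op_neg (Lop W rho l)"
proof -
  interpret ctx5 W rho l
    by (unfold_locales; fact)
  have inv: "hatE W rho l (hatE W rho l X) = X" for X
    by (simp add: hatE_def HH)
  have comp: "hatE W rho l (X \<circ> Y) = hatE W rho l X \<circ> hatE W rho l Y" for X Y
    by (simp add: hatE_def HH fun_eq_iff)
  have add: "hatE W rho l (op_add X Y) = op_add (hatE W rho l X) (hatE W rho l Y)" for X Y
    unfolding hatE_def op_add_def by (intro ext) (rule lin_add[OF hat_lin])
  have smult: "hatE W rho l (op_smult c X) = op_smult c (hatE W rho l X)" for c X
    unfolding hatE_def op_smult_def by (intro ext) (rule lin_smult[OF hat_lin])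
  have hid: "hatE W rho l id = id" by (simp add: hatE_def HH fun_eq_iff)
  have hm: "hatE W rho l (mult_op rho h) = Dop W rho l h" if "h \<in> PW W" for h
    unfolding hatE_def using hat_m[OF that] by (intro ext) simp
  have hL: "hatE W rho l (Lop W rho l) = op_neg (Lop W rho l)"
    unfolding hatE_def using hat_L by (intro ext) simp
  have closed: "hatE W rho l X \<in> alg W rho l" if "X \<in> alg W rho l" for X
    using that
  proof (induction rule: alg.induct)
    case (alg_mult h) thus ?case by (simp add: hm alg_Dop)
  next
    case alg_L thus ?case by (simp add: hL alg_negop alg.alg_L)
  next
    case alg_id show ?case unfolding hid by (rule alg.alg_id)
  next
    case (alg_add X Y) thus ?case by (simp add: add alg.alg_add)
  next
    case (alg_smult X c) thus ?case by (simp add: smult alg.alg_smult)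
  next
    case (alg_comp X Y) show ?case unfolding comp by (rule alg.alg_comp[OF alg_comp.IH])
  qed
  have bij: "bij_betw (hatE W rho l) (alg W rho l) (alg W rho l)"
    by (rule bij_betw_byWitness[where f' = "hatE W rho l"]) (auto simp: inv closed)
  show ?thesis using inv closed bij hid comp add smult hm hL by blast
qed


end
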